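(* Let $(G,k,d)$ be an instance of \textsc{Contraction(vc)} such that $G$ is connected, $k<\mathrm{rank}(G)$ and $2d\le k$. Then $(G,k,d)$ is a Yes-instance if and only if $d<\mathrm{vc}(G)$.
   Context: All graphs are finite, simple and undirected. $\mathrm{vc}(G)$ denotes the minimum size of a vertex cover of $G$. For an edge $e=uv$, $G/e$ is obtained from $G$ by deleting $u$ and $v$ and adding a new vertex adjacent to every vertex of $(N(u)\cup N(v))\setminus\{u,v\}$ (no loops or parallel edges are created); for $F\subseteq E(G)$, $G/F$ denotes the graph obtained by contracting all edges of $F$. $\mathrm{rank}(G)$ is $|V(G)|$ minus the number of connected components of $G$. An instance $(G,k,d)$ of \textsc{Contraction(vc)} (graph $G$, non-negative integers $k,d$) is a Yes-instance iff there exists $F\subseteq E(G)$ with $|F|\le k$ and $\mathrm{vc}(G/F)\le \mathrm{vc}(G)-d$. *)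

theory Defs
  imports Main
begin

definition simple_graph :: "'a set \<Rightarrow> 'a set set \<Rightarrow> bool" where
  "simple_graph V E \<longleftrightarrow> finite V \<and> (\<forall>e\<in>E. \<exists>u v. u \<noteq> v \<and> u \<in> V \<and> v \<in> V \<and> e = {u, v})"

definition vertex_cover :: "'a set \<Rightarrow> 'a set set \<Rightarrow> 'a set \<Rightarrow> bool" where
  "vertex_cover V E C \<longleftrightarrow> C \<subseteq> V \<and> (\<forall>e\<in>E. e \<inter> C \<noteq> {})"

definition vc :: "'a set \<Rightarrow> 'a set set \<Rightarrow> nat" where
  "vc V E = Min (card ` {C. vertex_cover V E C})"

definition edge_rel :: "'a set set \<Rightarrow> ('a \<times> 'a) set" where
  "edge_rel F = {(x, y). {x, y} \<in> F \<and> x \<noteq> y}"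

definition comp :: "'a set \<Rightarrow> 'a set set \<Rightarrow> 'a \<Rightarrow> 'a set" where
  "comp V F u = {v \<in> V. (u, v) \<in> (edge_rel F)\<^sup>*}"

definition components :: "'a set \<Rightarrow> 'a set set \<Rightarrow> 'a set set" where
  "components V F = comp V F ` V"

definition connected_graph :: "'a set \<Rightarrow> 'a set set \<Rightarrow> bool" where
  "connected_graph V E \<longleftrightarrow> (\<forall>u\<in>V. \<forall>v\<in>V. (u, v) \<in> (edge_rel E)\<^sup>*)"

definition graph_rank :: "'a set \<Rightarrow> 'a set set \<Rightarrow> nat" where
  "graph_rank V E = card V - card (components V E)"

text \<open>Contraction G/F of an edge set F: each connected component of (V,F) becomes
  one vertex; two distinct new vertices are adjacent iff some edge of G joins them
  (no loops, no parallel edges).\<close>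
definition contract_V :: "'a set \<Rightarrow> 'a set set \<Rightarrow> 'a set set" where
  "contract_V V F = components V F"

definition contract_E :: "'a set \<Rightarrow> 'a set set \<Rightarrow> 'a set set \<Rightarrow> 'a set set set" where
  "contract_E V E F = {{comp V F u, comp V F v} | u v. {u, v} \<in> E \<and> comp V F u \<noteq> comp V F v}"

text \<open>(G,k,d) is a Yes-instance of Contraction(vc): some F \<subseteq> E with |F| \<le> k
  and vc(G/F) \<le> vc(G) - d (integer arithmetic, written without subtraction).\<close>
definition contraction_vc_yes :: "'a set \<Rightarrow> 'a set set \<Rightarrow> nat \<Rightarrow> nat \<Rightarrow> bool" where
  "contraction_vc_yes V E k d \<longleftrightarrow>
     (\<exists>F. F \<subseteq> E \<and> card F \<le> k \<and> vc (contract_V V F) (contract_E V E F) + d \<le> vc V E)"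

end

theory Submission
  imports Defs
begin

lemma edge_rel_sym: "(x,y) \<in> edge_rel F \<Longrightarrow> (y,x) \<in> edge_rel F"
  by (auto simp: edge_rel_def insert_commute)

lemma edge_rel_mono: "F \<subseteq> F' \<Longrightarrow> edge_rel F \<subseteq> edge_rel F'"
  by (auto simp: edge_rel_def)

lemma tree_bound:
  assumes "finite F" "r \<in> V" "\<forall>v\<in>V. (v,r) \<in> (edge_rel F)\<^sup>*"
  shows "card (V - {r}) \<le> card F"
proof -
  let ?R = "edge_rel F"
  define dist where "dist v = (LEAST n. (v,r) \<in> ?R^^n)" for v
  define ws where "ws v = (SOME w. (v,w) \<in> ?R \<and> (w,r) \<in> ?R^^(dist v - 1))" for v
  have key: "(v, ws v) \<in> ?R \<and> dist (ws v) < dist v" if "v \<in> V - {r}" for v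
  proof -
    from that assms obtain n where n: "(v,r) \<in> ?R^^n" using rtrancl_power by blast
    hence dv: "(v,r) \<in> ?R^^(dist v)" unfolding dist_def by (rule LeastI)
    have "dist v \<noteq> 0" using dv that by (cases "dist v = 0") auto
    then obtain m where m: "dist v = Suc m" by (cases "dist v") auto
    from dv m obtain w where "(v,w) \<in> ?R" "(w,r) \<in> ?R^^m" using relpow_Suc_D2 by metis
    hence ex: "\<exists>w. (v,w) \<in> ?R \<and> (w,r) \<in> ?R^^(dist v - 1)" using m by auto
    hence ws: "(v, ws v) \<in> ?R \<and> (ws v, r) \<in> ?R^^(dist v - 1)" unfolding ws_def by (rule someI_ex)
    hence "dist (ws v) \<le> dist v - 1" unfolding dist_def[of "ws v"] by (simp add: Least_le)
    thus ?thesis using ws m by auto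
  qed
  have inj: "inj_on (\<lambda>v. {v, ws v}) (V - {r})"
  proof (rule inj_onI)
    fix x y assume x: "x \<in> V-{r}" and y: "y\<in>V-{r}" and eq: "{x, ws x} = {y, ws y}"
    show "x = y"
    proof (rule ccontr)
      assume "x\<noteq>y"
      with eq have "x = ws y" "y = ws x" by (auto simp: doubleton_eq_iff)
      hence "dist x = dist (ws y)" "dist y = dist (ws x)" by simp_all
      moreover have "dist (ws x) < dist x" "dist (ws y) < dist y" using key[OF x] key[OF y] by blast+
      ultimately show False by linarith
    qed
  qed
  have "(\<lambda>v. {v, ws v}) ` (V - {r}) \<subseteq> F" using key by (auto simp: edge_rel_def)
  from card_inj_on_le[OF inj this assms(1)] show ?thesis .
qed

lemma cut: "(a,b) \<in> (edge_rel E)\<^sup>* \<Longrightarrow> (a,b) \<notin> (edge_rel F)\<^sup>* \<Longrightarrow>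
  \<exists>x y. (x,y) \<in> edge_rel E \<and> (a,x) \<in> (edge_rel F)\<^sup>* \<and> (a,y) \<notin> (edge_rel F)\<^sup>*"
proof (induction rule: rtrancl_induct)
  case base thus ?case by simp
next
  case (step y z)
  show ?case
  proof (cases "(a,y) \<in> (edge_rel F)\<^sup>*")
    case True with step show ?thesis by blast
  next
    case False with step show ?thesis by blast
  qed
qed

lemma find_next:
  assumes cov: "\<forall>e\<in>E. e \<inter> C \<noteq> {}" and p: "(t0,c0) \<in> (edge_rel E)\<^sup>*" and "t0 \<in> T" "c0 \<in> C" "c0 \<notin> T"
  shows "\<exists>c\<in>C-T. \<exists>t\<in>T. (t,c) \<in> edge_rel E \<or> (\<exists>w. (t,w) \<in> edge_rel E \<and> (w,c) \<in> edge_rel E)"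
proof -
  have cov2: "y \<in> C \<or> z \<in> C" if "(y,z) \<in> edge_rel E" for y z
    using cov that by (auto simp: edge_rel_def)
  let ?D = "\<exists>c\<in>C-T. \<exists>t\<in>T. (t,c) \<in> edge_rel E \<or> (\<exists>w. (t,w) \<in> edge_rel E \<and> (w,c) \<in> edge_rel E)"
  have "?D \<or> y \<in> T \<or> (y \<notin> C \<and> (\<exists>t\<in>T. (t,y) \<in> edge_rel E))"
    if "(t0,y) \<in> (edge_rel E)\<^sup>*" for y
    using that
  proof (induction rule: rtrancl_induct)
    case base thus ?case using assms(3) by simp
  next
    case (step y z)
    have cz: "y \<in> C \<or> z \<in> C" using cov2[OF step.hyps(2)] .
    from step.IH show ?case
    proof (elim disjE)
      assume "?D" thus ?case by blast
    next
      assume yT: "y \<in> T"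
      show ?case
      proof (cases "z \<in> T")
        case True thus ?thesis by blast
      next
        case zT: False
        show ?thesis
        proof (cases "z \<in> C")
          case True
          hence "z \<in> C - T" using zT by blast
          hence ?D using yT step.hyps(2) by blast
          thus ?thesis by blast
        next
          case False thus ?thesis using yT step.hyps(2) by blast
        qed
      qed
    next
      assume "y \<notin> C \<and> (\<exists>t\<in>T. (t,y) \<in> edge_rel E)"
      then obtain t where t: "y \<notin> C" "t \<in> T" "(t,y) \<in> edge_rel E" by blast
      hence zC: "z \<in> C" using cz by blast
      show ?case
      proof (cases "z \<in> T")
        case True thus ?thesis by blast
      next
        case False
        hence "z \<in> C - T" using zC by blast
        hence ?D using t step.hyps(2) by blast
        thus ?thesis by blast
      qed
    qed
  qed
  from this[OF p] assms(4,5) show ?thesis by blast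
qed

lemma join:
  assumes "\<forall>u\<in>T. \<forall>v\<in>T. (u,v)\<in>R\<^sup>*" "t\<in>T" "(t,c)\<in>R\<^sup>*" "(c,t)\<in>R\<^sup>*"
  shows "\<forall>u\<in>insert c T. \<forall>v\<in>insert c T. (u,v)\<in>R\<^sup>*"
proof (intro ballI)
  fix u v assume u: "u \<in> insert c T" and v: "v \<in> insert c T"
  have uc: "(u,c) \<in> R\<^sup>*" "(c,u) \<in> R\<^sup>*" if "u \<in> T" for u
  proof -
    have "(u,t) \<in> R\<^sup>*" "(t,u) \<in> R\<^sup>*" using assms(1,2) that by blast+
    thus "(u,c) \<in> R\<^sup>*" "(c,u) \<in> R\<^sup>*" using assms(3,4) rtrancl_trans by metis+
  qed
  show "(u,v) \<in> R\<^sup>*"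
  proof (cases "u = c")
    case True
    thus ?thesis using v uc by auto
  next
    case False
    hence uT: "u \<in> T" using u by simp
    show ?thesis
    proof (cases "v = c")
      case True thus ?thesis using uc uT by simp
    next
      case False thus ?thesis using v uT assms(1) by simp
    qed
  qed
qed

lemma simple_finE: "simple_graph V E \<Longrightarrow> finite E"
proof -
  assume sg: "simple_graph V E"
  hence "E \<subseteq> Pow V" by (auto simp: simple_graph_def)
  moreover have "finite V" using sg by (simp add: simple_graph_def)
  ultimately show ?thesis by (meson finite_Pow_iff finite_subset)
qed

lemma grow:
  assumes sg: "simple_graph V E" and conn: "connected_graph V E" and cov: "vertex_cover V E C"
    and fC: "finite C"
  shows "m + 1 \<le> card C \<Longrightarrow> \<exists>F T. F \<subseteq> E \<and> card F \<le> 2*m \<and> T \<subseteq> C \<and> card T = m+1 \<and>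
     (\<forall>u\<in>T. \<forall>v\<in>T. (u,v) \<in> (edge_rel F)\<^sup>*)"
proof (induction m)
  case 0
  then obtain c where "c \<in> C" using card.empty by fastforce
  thus ?case by (intro exI[of _ "{}"] exI[of _ "{c}"]) auto
next
  case (Suc m)
  then obtain F T where F: "F \<subseteq> E" "card F \<le> 2*m" "T \<subseteq> C" "card T = m+1"
    and cn: "\<forall>u\<in>T. \<forall>v\<in>T. (u,v) \<in> (edge_rel F)\<^sup>*" by auto
  have finE: "finite E" using simple_finE[OF sg] .
  have finF: "finite F" using F(1) finE finite_subset by blast
  have finT: "finite T" using F(3) fC finite_subset by blast
  have "C - T \<noteq> {}"
  proof
    assume "C - T = {}"
    hence "C \<subseteq> T" by blast
    hence "card C \<le> card T" using finT card_mono by blast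
    thus False using Suc.prems F(4) by simp
  qed
  then obtain c0 where c0: "c0 \<in> C" "c0 \<notin> T" by blast
  from F(4) obtain t0 where t0: "t0 \<in> T" using card.empty by fastforce
  have CV: "C \<subseteq> V" using cov by (simp add: vertex_cover_def)
  have "(t0,c0) \<in> (edge_rel E)\<^sup>*" using conn t0 c0 F(3) CV unfolding connected_graph_def by blast
  from find_next[OF _ this t0 c0] cov obtain c t where ct: "c \<in> C" "c \<notin> T" "t \<in> T"
    and alt: "(t,c) \<in> edge_rel E \<or> (\<exists>w. (t,w) \<in> edge_rel E \<and> (w,c) \<in> edge_rel E)"
    by (auto simp: vertex_cover_def)
  have cardT': "card (insert c T) = Suc m + 1" using finT ct F(4) by simp
  from alt show ?case
  proof
    assume e: "(t,c) \<in> edge_rel E"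
    define F' where "F' = insert {t,c} F"
    have "{t,c} \<in> E" using e by (simp add: edge_rel_def)
    hence F'E: "F' \<subseteq> E" using F(1) by (simp add: F'_def)
    have "card F' \<le> Suc (card F)" using finF unfolding F'_def by (simp add: card_insert_if)
    hence cF': "card F' \<le> 2 * Suc m" using F(2) by simp
    have sub: "(edge_rel F)\<^sup>* \<subseteq> (edge_rel F')\<^sup>*"
      by (rule rtrancl_mono, rule edge_rel_mono, auto simp: F'_def)
    have tc: "(t,c) \<in> edge_rel F'" using e by (auto simp: F'_def edge_rel_def)
    have "\<forall>u\<in>insert c T. \<forall>v\<in>insert c T. (u,v) \<in> (edge_rel F')\<^sup>*"
    proof (rule join[OF _ ct(3)])
      show "\<forall>u\<in>T. \<forall>v\<in>T. (u,v) \<in> (edge_rel F')\<^sup>*" using cn sub by blast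
      show "(t,c) \<in> (edge_rel F')\<^sup>*" using tc by (rule r_into_rtrancl)
      show "(c,t) \<in> (edge_rel F')\<^sup>*" using edge_rel_sym[OF tc] by (rule r_into_rtrancl)
    qed
    moreover have "insert c T \<subseteq> C" using ct F(3) by blast
    ultimately show ?case using F'E cF' cardT' by (intro exI[of _ F'] exI[of _ "insert c T"]) simp
  next
    assume "\<exists>w. (t,w) \<in> edge_rel E \<and> (w,c) \<in> edge_rel E"
    then obtain w where e1: "(t,w) \<in> edge_rel E" and e2: "(w,c) \<in> edge_rel E" by blast
    define F' where "F' = insert {t,w} (insert {w,c} F)"
    have "{t,w} \<in> E" "{w,c} \<in> E" using e1 e2 by (simp_all add: edge_rel_def)
    hence F'E: "F' \<subseteq> E" using F(1) by (simp add: F'_def)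
    have "card F' \<le> card F + 2"
      unfolding F'_def using finF by (simp add: card_insert_if)
    hence cF': "card F' \<le> 2 * Suc m" using F(2) by simp
    have sub: "(edge_rel F)\<^sup>* \<subseteq> (edge_rel F')\<^sup>*"
      by (rule rtrancl_mono, rule edge_rel_mono, auto simp: F'_def)
    have tw: "(t,w) \<in> edge_rel F'" using e1 by (auto simp: F'_def edge_rel_def)
    have wc: "(w,c) \<in> edge_rel F'" using e2 by (auto simp: F'_def edge_rel_def)
    have p1: "(t,c) \<in> (edge_rel F')\<^sup>*" using tw wc by (meson converse_rtrancl_into_rtrancl r_into_rtrancl)
    have p2: "(c,t) \<in> (edge_rel F')\<^sup>*" using edge_rel_sym[OF tw] edge_rel_sym[OF wc]
      by (meson converse_rtrancl_into_rtrancl r_into_rtrancl)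
    have "\<forall>u\<in>insert c T. \<forall>v\<in>insert c T. (u,v) \<in> (edge_rel F')\<^sup>*"
    proof (rule join[OF _ ct(3) p1 p2])
      show "\<forall>u\<in>T. \<forall>v\<in>T. (u,v) \<in> (edge_rel F')\<^sup>*" using cn sub by blast
    qed
    moreover have "insert c T \<subseteq> C" using ct F(3) by blast
    ultimately show ?case using F'E cF' cardT' by (intro exI[of _ F'] exI[of _ "insert c T"]) simp
  qed
qed

lemma vc_fin: "finite V \<Longrightarrow> finite (card ` {C. vertex_cover V E C})"
proof -
  assume "finite V"
  moreover have "{C. vertex_cover V E C} \<subseteq> Pow V" by (auto simp: vertex_cover_def)
  ultimately show ?thesis by (meson finite_Pow_iff finite_imageI finite_subset)
qed

lemma vc_le: "finite V \<Longrightarrow> vertex_cover V E C \<Longrightarrow> vc V E \<le> card C"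
  unfolding vc_def by (rule Min_le[OF vc_fin]) auto

lemma vc_ex: "finite V \<Longrightarrow> vertex_cover V E C0 \<Longrightarrow> \<exists>C. vertex_cover V E C \<and> card C = vc V E"
proof -
  assume a: "finite V" "vertex_cover V E C0"
  have "vc V E \<in> card ` {C. vertex_cover V E C}"
    unfolding vc_def by (rule Min_in[OF vc_fin[OF a(1)]]) (use a(2) in auto)
  thus ?thesis by auto
qed

theorem mainTheorem6:
  fixes V :: "'a set" and E :: "'a set set" and k d :: nat
  assumes "simple_graph V E"
    and "connected_graph V E"
    and "k < graph_rank V E"
    and "2 * d \<le> k"
  shows "contraction_vc_yes V E k d \<longleftrightarrow> d < vc V E"
proof -
  have finV: "finite V" using assms(1) by (simp add: simple_graph_def)
  have finE: "finite E" using simple_finE[OF assms(1)] .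
  have EsubV: "\<forall>e\<in>E. e \<subseteq> V" using assms(1) by (auto simp: simple_graph_def)
  have Vne: "V \<noteq> {}"
  proof
    assume "V = {}" thus False using assms(3) by (simp add: graph_rank_def)
  qed
  have cV: "comp V E u = V" if "u \<in> V" for u
    using assms(2) that unfolding comp_def connected_graph_def by blast
  have compE: "components V E = {V}"
    unfolding components_def using cV Vne by auto
  have rank: "graph_rank V E = card V - 1" by (simp add: graph_rank_def compE)
  have covV: "vertex_cover V E V"
    using assms(1) unfolding vertex_cover_def simple_graph_def by blast
  show ?thesis
  proof
    assume "contraction_vc_yes V E k d"
    then obtain F where F: "F \<subseteq> E" "card F \<le> k"
      "vc (contract_V V F) (contract_E V E F) + d \<le> vc V E"
      unfolding contraction_vc_yes_def by blast
    have finF: "finite F" using F(1) finE finite_subset by blast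
    have "\<not> (\<forall>a\<in>V. \<forall>b\<in>V. (a,b) \<in> (edge_rel F)\<^sup>*)"
    proof
      assume H: "\<forall>a\<in>V. \<forall>b\<in>V. (a,b) \<in> (edge_rel F)\<^sup>*"
      obtain r where r: "r \<in> V" using Vne by blast
      have "card (V - {r}) \<le> card F" using tree_bound[OF finF r] H r by blast
      moreover have "card (V - {r}) = card V - 1" using r finV by simp
      ultimately show False using F(2) assms(3) rank by linarith
    qed
    then obtain a b where ab: "a\<in>V" "b\<in>V" "(a,b) \<notin> (edge_rel F)\<^sup>*" by blast
    have "(a,b) \<in> (edge_rel E)\<^sup>*" using assms(2) ab unfolding connected_graph_def by blast
    from cut[OF this ab(3)] obtain x y where xy: "(x,y) \<in> edge_rel E"
      "(a,x) \<in> (edge_rel F)\<^sup>*" "(a,y) \<notin> (edge_rel F)\<^sup>*" by blast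
    have xyE: "{x,y} \<in> E" using xy(1) by (simp add: edge_rel_def)
    hence yV: "y \<in> V" using EsubV by blast
    have neq: "comp V F x \<noteq> comp V F y"
    proof
      assume eq: "comp V F x = comp V F y"
      have "y \<in> comp V F y" using yV by (simp add: comp_def)
      hence "y \<in> comp V F x" using eq by simp
      hence "(x,y) \<in> (edge_rel F)\<^sup>*" by (simp add: comp_def)
      thus False using xy(2,3) by (meson rtrancl_trans)
    qed
    let ?V' = "contract_V V F" and ?E' = "contract_E V E F"
    have e': "{comp V F x, comp V F y} \<in> ?E'" unfolding contract_E_def using xyE neq by blast
    have finV': "finite ?V'" unfolding contract_V_def components_def using finV by simp
    have covV': "vertex_cover ?V' ?E' ?V'"
      unfolding vertex_cover_def contract_E_def contract_V_def components_def
    proof (intro conjI ballI)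
      fix e assume "e \<in> {{comp V F u, comp V F v} |u v. {u,v} \<in> E \<and> comp V F u \<noteq> comp V F v}"
      then obtain u v where e: "e = {comp V F u, comp V F v}" "{u,v} \<in> E" by blast
      have "u \<in> V" using e(2) EsubV by blast
      hence "comp V F u \<in> e \<inter> comp V F ` V" using e(1) by blast
      thus "e \<inter> comp V F ` V \<noteq> {}" by blast
    qed simp
    obtain C' where C': "vertex_cover ?V' ?E' C'" "card C' = vc ?V' ?E'"
      using vc_ex[OF finV' covV'] by blast
    have "C' \<noteq> {}" using C'(1) e' unfolding vertex_cover_def by blast
    moreover have "finite C'" using C'(1) finV' unfolding vertex_cover_def by (meson finite_subset)
    ultimately have "card C' \<ge> 1" by (simp add: Suc_le_eq card_gt_0_iff)
    thus "d < vc V E" using C'(2) F(3) by linarith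
  next
    assume dlt: "d < vc V E"
    obtain C where C: "vertex_cover V E C" "card C = vc V E" using vc_ex[OF finV covV] by blast
    have CV: "C \<subseteq> V" using C(1) by (simp add: vertex_cover_def)
    have finC: "finite C" using CV finV by (meson finite_subset)
    have "d + 1 \<le> card C" using dlt C(2) by simp
    from grow[OF assms(1,2) C(1) finC this] obtain F T where FT: "F \<subseteq> E" "card F \<le> 2*d"
      "T \<subseteq> C" "card T = d+1" and cn: "\<forall>u\<in>T. \<forall>v\<in>T. (u,v) \<in> (edge_rel F)\<^sup>*" by blast
    let ?c = "comp V F"
    let ?V' = "contract_V V F" and ?E' = "contract_E V E F"
    define C' where "C' = ?c ` C"
    have cov': "vertex_cover ?V' ?E' C'"
      unfolding vertex_cover_def contract_V_def components_def contract_E_def C'_def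
    proof (intro conjI ballI)
      show "?c ` C \<subseteq> ?c ` V" using CV by blast
      fix e assume "e \<in> {{?c u, ?c v} |u v. {u,v} \<in> E \<and> ?c u \<noteq> ?c v}"
      then obtain u v where e: "e = {?c u, ?c v}" "{u,v} \<in> E" by blast
      have "{u,v} \<inter> C \<noteq> {}" using C(1) e(2) unfolding vertex_cover_def by blast
      thus "e \<inter> ?c ` C \<noteq> {}" using e(1) by blast
    qed
    have finV': "finite ?V'" unfolding contract_V_def components_def using finV by simp
    have vcle: "vc ?V' ?E' \<le> card C'" by (rule vc_le[OF finV' cov'])
    have "T \<noteq> {}" using FT(4) by auto
    then obtain t0 where t0: "t0 \<in> T" by blast
    have ceq: "?c u = ?c t0" if "u \<in> T" for u
    proof -
      have "(u,t0) \<in> (edge_rel F)\<^sup>*" "(t0,u) \<in> (edge_rel F)\<^sup>*" using cn that t0 by blast+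
      thus ?thesis unfolding comp_def by (blast intro: rtrancl_trans)
    qed
    have split: "C' = ?c ` T \<union> ?c ` (C - T)" unfolding C'_def using FT(3) by blast
    have "?c ` T \<subseteq> {?c t0}" using ceq by blast
    hence c1: "card (?c ` T) \<le> 1" using card_mono[of "{?c t0}" "?c ` T"] by simp
    have c2: "card (?c ` (C-T)) \<le> card (C - T)" using finC by (simp add: card_image_le)
    have finT: "finite T" using FT(3) finC finite_subset by blast
    have c3: "card (C - T) = card C - (d+1)" using card_Diff_subset[OF finT FT(3)] FT(4) by simp
    have "card C' \<le> card (?c ` T) + card (?c ` (C-T))" unfolding split by (rule card_Un_le)
    hence "card C' + d \<le> card C" using c1 c2 c3 \<open>d + 1 \<le> card C\<close> by linarith
    hence "vc ?V' ?E' + d \<le> vc V E" using vcle C(2) by linarith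
    thus "contraction_vc_yes V E k d" unfolding contraction_vc_yes_def
      using FT(1,2) assms(4) by (intro exI[of _ F]) auto
  qed
qed

end
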